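(* Let $(S_n,X_n)_{n\ge 0}$ be an alternating non-homogeneous semi-Markov process with $S_0=1$, $X_0=0$, whose semi-Markov kernels are, for each $x\ge0$, Weibull distributions $$G_T(x,\tau)=1-e^{-(\lambda_T(x)\tau)^{k_T(x)}},\qquad \tau\ge0,\ T\in\{Y,Z\},$$ with measurable shape functions $k_Y,k_Z:[0,\infty)\to(0,\infty)$ and rate functions $\lambda_Y,\lambda_Z:[0,\infty)\to(0,\infty)$. Suppose (i) there is $c>0$ with $\lambda_Y(x)\le c$ and $\lambda_Z(x)\le c$ for all $x\ge0$, and (ii) either there is $k\ge1$ with $1\le k_Y(x)\le k$ and $1\le k_Z(x)\le k$ for all $x\ge 0$, or there is $k>0$ with $k_Y(x)=k_Z(x)=k$ for all $x\ge0$. Then $\mathbb P(X_\infty<\infty)=0$.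
   Context: Let $(S_n,X_n)_{n\ge0}$ be random variables on a probability space with $S_n\in\{0,1\}$, $0=X_0\le X_1\le X_2\le\cdots$, $S_0=1$, and alternating states: $S_n=1$ for even $n$ and $S_n=0$ for odd $n$. Write $T_{n+1}=X_{n+1}-X_n$ (sojourn times). The process is called an alternating non-homogeneous semi-Markov process with semi-Markov kernels $G_Y,G_Z$ if for every $n\ge 0$ the conditional distribution of $T_{n+1}$ given $(S_0,X_0),\dots,(S_n,X_n)$ depends only on $(S_n,X_n)$ (and not on $n$), with $\mathbb P(T_{n+1}\le \tau\mid S_n=1,X_n=x)=G_Y(x,\tau)$ and $\mathbb P(T_{n+1}\le\tau\mid S_n=0,X_n=x)=G_Z(x,\tau)$ for all $x,\tau\ge 0$; here for each $x\ge0$, $G_Y(x,\cdot)$ and $G_Z(x,\cdot)$ are distribution functions on $[0,\infty)$, jointly measurable in $(x,\tau)$, absolutely continuous with densities $g_Y(x,\cdot)$, $g_Z(x,\cdot)$. Periods spent in state $1$ are called $Y$-phases, periods in state $0$ are $Z$-phases. The explosion time is $X_\infty=\lim_{n\to\infty}X_n$. *)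

theory Defs
  imports "HOL-Probability.Probability"
begin

definition weibull_kernel :: "(real \<Rightarrow> real) \<Rightarrow> (real \<Rightarrow> real) \<Rightarrow> real \<Rightarrow> real \<Rightarrow> real" where
  "weibull_kernel lam kk x \<tau> = 1 - exp (- ((lam x * \<tau>) powr (kk x)))"

definition alt_state :: "nat \<Rightarrow> nat" where
  "alt_state n = (if even n then 1 else 0)"

text \<open>Alternating non-homogeneous semi-Markov process with kernels GY, GZ,
  started in S_0 = 1, X_0 = 0.  Since the states are deterministic, the history
  sigma-algebra generated by (S_0,X_0),...,(S_n,X_n) is generated by (X_0,...,X_n),
  i.e. consists of the sets {(X_0,...,X_n) \<in> B} for Borel B.  The conditional
  distribution of T_{n+1} = X_{n+1} - X_n given this history is G_{S_n}(X_n, .).\<close>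
definition alt_semi_markov ::
  "'a measure \<Rightarrow> (nat \<Rightarrow> 'a \<Rightarrow> real) \<Rightarrow> (real \<Rightarrow> real \<Rightarrow> real) \<Rightarrow> (real \<Rightarrow> real \<Rightarrow> real) \<Rightarrow> bool" where
  "alt_semi_markov M X GY GZ \<longleftrightarrow>
     prob_space M \<and>
     (\<forall>n. X n \<in> borel_measurable M) \<and>
     (\<forall>\<omega>\<in>space M. X 0 \<omega> = 0 \<and> (\<forall>n. X n \<omega> \<le> X (Suc n) \<omega>)) \<and>
     (\<forall>n \<tau> (B :: (nat \<Rightarrow> real) set). \<tau> \<ge> 0 \<longrightarrow> B \<in> sets (PiM {..n} (\<lambda>_. borel)) \<longrightarrow>
        measure M ({\<omega>\<in>space M. X (Suc n) \<omega> - X n \<omega> \<le> \<tau>}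
                    \<inter> {\<omega>\<in>space M. (\<lambda>i\<in>{..n}. X i \<omega>) \<in> B})
        = set_lebesgue_integral M {\<omega>\<in>space M. (\<lambda>i\<in>{..n}. X i \<omega>) \<in> B}
            (\<lambda>\<omega>. (if alt_state n = 1 then GY else GZ) (X n \<omega>) \<tau>))"

end

theory Submission
  imports Defs
begin

lemma wk_bound:
  assumes "0 < lam x" "lam x \<le> c" "0 < kk x" "c > 0"
  shows "weibull_kernel lam kk x (1/c) \<le> 1 - exp (-1)"
proof -
  have a: "0 < lam x * (1/c)" "lam x * (1/c) \<le> 1" using assms by (auto simp: field_simps)
  have "(lam x * (1/c)) powr kk x \<le> 1" using a assms by (intro powr_le1) auto
  then show ?thesis unfolding weibull_kernel_def by simp
qed

lemma Bmeas:
  "{f \<in> space (PiM {..n} (\<lambda>_. borel)). \<forall>j\<in>{m..<n}. f (Suc j) - f j \<le> (d::real)}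
    \<in> sets (PiM {..n} (\<lambda>_. borel))"
proof -
  have "\<And>j. j \<in> {m..<n} \<Longrightarrow> Measurable.pred (PiM {..n} (\<lambda>_. borel)) (\<lambda>f. f (Suc j) - f j \<le> (d::real))"
  proof -
    fix j assume j: "j \<in> {m..<n}"
    have "(\<lambda>f. f (Suc j) - f j) \<in> borel_measurable (PiM {..n} (\<lambda>_. borel::real measure))"
      using j by (intro borel_measurable_diff measurable_component_singleton) auto
    then show "Measurable.pred (PiM {..n} (\<lambda>_. borel)) (\<lambda>f. f (Suc j) - f j \<le> (d::real))"
      by measurable
  qed
  then show ?thesis by (intro pred_intros_finite[unfolded pred_def] ) auto
qed

theorem proposition2:
  fixes M :: "'a measure" and X :: "nat \<Rightarrow> 'a \<Rightarrow> real"
    and lamY lamZ kY kZ :: "real \<Rightarrow> real"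
  assumes meas: "lamY \<in> borel_measurable borel" "lamZ \<in> borel_measurable borel"
                "kY \<in> borel_measurable borel" "kZ \<in> borel_measurable borel"
    and pos: "\<forall>x\<ge>0. lamY x > 0 \<and> lamZ x > 0 \<and> kY x > 0 \<and> kZ x > 0"
    and proc: "alt_semi_markov M X (weibull_kernel lamY kY) (weibull_kernel lamZ kZ)"
    and bnd_rate: "\<exists>c>0. \<forall>x\<ge>0. lamY x \<le> c \<and> lamZ x \<le> c"
    and shape: "(\<exists>k\<ge>1. \<forall>x\<ge>0. 1 \<le> kY x \<and> kY x \<le> k \<and> 1 \<le> kZ x \<and> kZ x \<le> k)
              \<or> (\<exists>k>0. \<forall>x\<ge>0. kY x = k \<and> kZ x = k)"
  shows "measure M {\<omega>\<in>space M. (SUP n. ereal (X n \<omega>)) < \<infinity>} = 0"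
proof -
  obtain c where c: "c > 0" "\<forall>x\<ge>0. lamY x \<le> c \<and> lamZ x \<le> c" using bnd_rate by blast
  define d where "d = 1 / c"
  define q :: real where "q = 1 - exp (-1)"
  have d0: "d > 0" using c by (simp add: d_def)
  have q0: "0 \<le> q" "q < 1" unfolding q_def by auto
  interpret P: prob_space M using proc unfolding alt_semi_markov_def by blast
  have Xm: "\<And>n. X n \<in> borel_measurable M" using proc unfolding alt_semi_markov_def by blast
  have X0: "\<And>\<omega>. \<omega> \<in> space M \<Longrightarrow> X 0 \<omega> = 0" and Xmono: "\<And>\<omega> n. \<omega> \<in> space M \<Longrightarrow> X n \<omega> \<le> X (Suc n) \<omega>"
    using proc unfolding alt_semi_markov_def by blast+
  have key: "\<And>n \<tau> B. \<tau> \<ge> 0 \<Longrightarrow> B \<in> sets (PiM {..n} (\<lambda>_. borel)) \<Longrightarrow>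
        measure M ({\<omega>\<in>space M. X (Suc n) \<omega> - X n \<omega> \<le> \<tau>}
                    \<inter> {\<omega>\<in>space M. (\<lambda>i\<in>{..n}. X i \<omega>) \<in> B})
        = set_lebesgue_integral M {\<omega>\<in>space M. (\<lambda>i\<in>{..n}. X i \<omega>) \<in> B}
            (\<lambda>\<omega>. (if alt_state n = 1 then weibull_kernel lamY kY else weibull_kernel lamZ kZ) (X n \<omega>) \<tau>)"
    using proc unfolding alt_semi_markov_def by blast
  have Xnn: "\<And>\<omega> n. \<omega> \<in> space M \<Longrightarrow> 0 \<le> X n \<omega>"
  proof -
    fix \<omega> n assume w: "\<omega> \<in> space M"
    have "mono (\<lambda>n. X n \<omega>)" using Xmono[OF w] by (simp add: mono_iff_le_Suc)
    then show "0 \<le> X n \<omega>" using X0[OF w] by (metis le0 monoD)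
  qed
  have Gb: "\<And>\<omega> n. \<omega> \<in> space M \<Longrightarrow>
     (if alt_state n = 1 then weibull_kernel lamY kY else weibull_kernel lamZ kZ) (X n \<omega>) d \<le> q"
    using Xnn pos c unfolding d_def q_def by (auto intro!: wk_bound)
  define E where "E m n = {\<omega>\<in>space M. \<forall>j\<in>{m..<n}. X (Suc j) \<omega> - X j \<omega> \<le> d}" for m n
  have Esets: "E m n \<in> sets M" for m n
    unfolding E_def using Xm by measurable
  have Ebound: "measure M (E m (m + N)) \<le> q ^ N" for m N
  proof (induction N)
    case 0
    then show ?case by simp
  next
    case (Suc N)
    define n where "n = m + N"
    define B where "B = {f \<in> space (PiM {..n} (\<lambda>_. borel)). \<forall>j\<in>{m..<n}. f (Suc j) - f j \<le> d}"
    have Bs: "B \<in> sets (PiM {..n} (\<lambda>_. borel))" unfolding B_def by (rule Bmeas)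
    have HE: "{\<omega>\<in>space M. (\<lambda>i\<in>{..n}. X i \<omega>) \<in> B} = E m n"
      unfolding B_def E_def by (auto simp: space_PiM)
    have ES: "E m (m + Suc N) = {\<omega>\<in>space M. X (Suc n) \<omega> - X n \<omega> \<le> d} \<inter> E m n"
      unfolding E_def n_def by (auto simp: less_Suc_eq)
    define G where "G = (\<lambda>\<omega>. (if alt_state n = 1 then weibull_kernel lamY kY else weibull_kernel lamZ kZ) (X n \<omega>) d)"
    have "measure M (E m (m + Suc N)) = set_lebesgue_integral M (E m n) G"
      using key[OF _ Bs, of d] d0 unfolding ES HE G_def by simp
    also have "\<dots> \<le> q * measure M (E m n)"
    proof (cases "set_integrable M (E m n) G")
      case True
      have "set_lebesgue_integral M (E m n) G \<le> set_lebesgue_integral M (E m n) (\<lambda>_. q)"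
        unfolding set_lebesgue_integral_def
      proof (rule integral_mono)
        show "integrable M (\<lambda>x. indicator (E m n) x *\<^sub>R G x)" using True by (simp add: set_integrable_def)
        have "integrable M (indicator (E m n) :: 'a \<Rightarrow> real)" using Esets[of m n] by (simp add: P.emeasure_eq_measure)
        then show "integrable M (\<lambda>x. indicator (E m n) x *\<^sub>R q)" by simp
        fix x assume "x \<in> space M"
        then show "indicator (E m n) x *\<^sub>R G x \<le> indicator (E m n) x *\<^sub>R q"
          using Gb[of x n] unfolding G_def by (simp add: indicator_def split: if_splits)
      qed
      also have "\<dots> = q * measure M (E m n)" using Esets[of m n] by (simp add: set_integral_const)
      finally show ?thesis .
    next
      case False
      then have "set_lebesgue_integral M (E m n) G = 0"
        unfolding set_lebesgue_integral_def set_integrable_def by (simp add: not_integrable_integral_eq)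
      then show ?thesis using q0 by simp
    qed
    also have "\<dots> \<le> q * q ^ N" using Suc q0 unfolding n_def by (intro mult_left_mono) auto
    finally show ?case by simp
  qed
  have Inull: "(\<Inter>N. E m (m + N)) \<in> null_sets M" for m
  proof -
    have I: "(\<Inter>N. E m (m + N)) \<in> sets M" using Esets by auto
    have "measure M (\<Inter>N. E m (m + N)) \<le> q ^ N" for N
      using Ebound[of m N] P.finite_measure_mono[OF _ Esets, of "\<Inter>N. E m (m + N)" m "m+N"] by force
    moreover have "(\<lambda>N. q ^ N) \<longlonglongrightarrow> 0" using q0 by (intro LIMSEQ_power_zero) auto
    ultimately have "measure M (\<Inter>N. E m (m + N)) \<le> 0"
      by (intro LIMSEQ_le_const[of "\<lambda>N. q ^ N" 0]) auto
    then have "measure M (\<Inter>N. E m (m + N)) = 0" by (simp add: antisym)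
    then show ?thesis using I by (simp add: P.emeasure_eq_measure null_sets_def)
  qed
  have Nn: "(\<Union>m. \<Inter>N. E m (m + N)) \<in> null_sets M" using Inull by auto
  have sub: "{\<omega>\<in>space M. (SUP n. ereal (X n \<omega>)) < \<infinity>} \<subseteq> (\<Union>m. \<Inter>N. E m (m + N))"
  proof
    fix \<omega> assume "\<omega> \<in> {\<omega>\<in>space M. (SUP n. ereal (X n \<omega>)) < \<infinity>}"
    then have w: "\<omega> \<in> space M" and S: "(SUP n. ereal (X n \<omega>)) < \<infinity>" by auto
    have mono: "mono (\<lambda>n. X n \<omega>)" using Xmono[OF w] by (simp add: mono_iff_le_Suc)
    obtain L where L: "(SUP n. ereal (X n \<omega>)) = ereal L"
    proof -
      have "ereal (X 0 \<omega>) \<le> (SUP n. ereal (X n \<omega>))" by (rule SUP_upper) auto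
      then show ?thesis using S that by (cases "(SUP n. ereal (X n \<omega>))") auto
    qed
    have XL: "X n \<omega> \<le> L" for n using L by (metis SUP_upper UNIV_I ereal_less_eq(3))
    have "ereal (L - d) < (SUP n. ereal (X n \<omega>))" using L d0 by simp
    then obtain m where m: "L - d < X m \<omega>" by (auto simp: less_SUP_iff)
    have "\<omega> \<in> E m (m + N)" for N
      unfolding E_def using w
    proof (auto)
      fix j assume "m \<le> j"
      then have "X m \<omega> \<le> X j \<omega>" using mono by (metis monoD)
      then show "X (Suc j) \<omega> - X j \<omega> \<le> d" using XL[of "Suc j"] m by linarith
    qed
    then show "\<omega> \<in> (\<Union>m. \<Inter>N. E m (m + N))" by blast
  qed
  show ?thesis
  proof (cases "{\<omega>\<in>space M. (SUP n. ereal (X n \<omega>)) < \<infinity>} \<in> sets M")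
    case True
    then show ?thesis using null_sets_subset[OF Nn True sub] by (simp add: measure_eq_0_null_sets)
  next
    case False
    then show ?thesis by (simp add: measure_notin_sets)
  qed
qed

end
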